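(* Let $f:[0,1]\to\mathbb{R}$ with $f(0),f(1)\in\mathbb{Z}$ and let $n\in\mathbb{N}_+$. If $n\ge 3$, let also $\phi_n:[0,1]\to\mathbb{R}$ satisfy \[ \phi_n\left(\frac{k+1}{n}\right)-\phi_n\left(\frac{k}{n}\right)\ge \binom{n}{k+1}^{-1},\quad k=1,\dots,n-2. \] If $f$ is monotone increasing on $[0,1/n]$ and on $[1-1/n,1]$, and (when $n\ge3$) $f(x)-\phi_n(x)$ is monotone increasing on $[1/n,1-1/n]$, then $\widetilde{B}_n(f)$ is monotone increasing on $[0,1]$.
   Context: For $n\in\mathbb{N}_+$ and $f:[0,1]\to\mathbb{R}$, $\widetilde{B}_n(f)(x):=\sum_{k=0}^n \left[f\left(\frac{k}{n}\right)\binom{n}{k}\right]x^k(1-x)^{n-k}$, where $[\alpha]$ is the largest integer $\le\alpha$. Monotone increasing is meant in the non-strict sense. *)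

theory Defs
  imports "HOL-Analysis.Analysis"
begin

definition Btilde :: "nat \<Rightarrow> (real \<Rightarrow> real) \<Rightarrow> real \<Rightarrow> real" where
  "Btilde n f x = (\<Sum>k=0..n. real_of_int \<lfloor>f (real k / real n) * real (n choose k)\<rfloor>
                      * x ^ k * (1 - x) ^ (n - k))"

end

theory Submission imports Defs begin

lemma term_deriv:
  "((\<lambda>x::real. a * x^k * (1-x)^(n-k)) has_real_derivative
     (a * real k * x^(k-1) * (1-x)^(n-k) - a * real (n-k) * x^k * (1-x)^(n-k-1))) (at x)"
  by (auto intro!: derivative_eq_intros simp: algebra_simps)

lemma deriv_form:
  fixes a :: "nat \<Rightarrow> real"
  shows "(\<Sum>k=0..n. a k * real k * x^(k-1) * (1-x)^(n-k) - a k * real (n-k) * x^k * (1-x)^(n-k-1))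
    = (\<Sum>k<n. (real (k+1) * a (k+1) - real (n-k) * a k) * x^k * (1-x)^(n-1-k))"
proof -
  have 1: "(\<Sum>k=0..n. a k * real k * x^(k-1) * (1-x)^(n-k)) = (\<Sum>k<n. real (k+1) * a (k+1) * x^k * (1-x)^(n-1-k))"
  proof -
    have "(\<Sum>k=0..n. a k * real k * x^(k-1) * (1-x)^(n-k)) = (\<Sum>k=Suc 0..n. a k * real k * x^(k-1) * (1-x)^(n-k))"
      by (rule sum.mono_neutral_right) auto
    also have "\<dots> = (\<Sum>k=0..<n. a (Suc k) * real (Suc k) * x^k * (1-x)^(n-Suc k))"
    proof (cases n)
      case 0 then show ?thesis by simp
    next
      case (Suc m)
      have "(\<Sum>k=Suc 0..Suc m. a k * real k * x^(k-1) * (1-x)^(Suc m-k)) = (\<Sum>k=0..m. a (Suc k) * real (Suc k) * x^k * (1-x)^(Suc m-Suc k))"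
        by (subst sum.shift_bounds_cl_Suc_ivl) simp
      then show ?thesis using Suc by (simp add: atLeastLessThanSuc_atLeastAtMost)
    qed
    finally show ?thesis by (simp add: atLeast0LessThan algebra_simps)
  qed
  have 2: "(\<Sum>k=0..n. a k * real (n-k) * x^k * (1-x)^(n-k-1)) = (\<Sum>k<n. real (n-k) * a k * x^k * (1-x)^(n-1-k))"
  proof -
    have "(\<Sum>k=0..n. a k * real (n-k) * x^k * (1-x)^(n-k-1)) = (\<Sum>k<Suc n. a k * real (n-k) * x^k * (1-x)^(n-k-1))"
      by (simp add: atLeast0AtMost lessThan_Suc_atMost)
    also have "\<dots> = (\<Sum>k<n. a k * real (n-k) * x^k * (1-x)^(n-k-1))" by simp
    finally show ?thesis by (simp add: algebra_simps)
  qed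
  show ?thesis using 1 2 by (simp add: sum_subtractf left_diff_distrib)
qed

lemma bern_mono:
  fixes a :: "nat \<Rightarrow> real"
  assumes "\<And>k. k < n \<Longrightarrow> real (n-k) * a k \<le> real (k+1) * a (k+1)"
  shows "mono_on {0..1} (\<lambda>x. \<Sum>k=0..n. a k * x^k * (1-x)^(n-k))"
proof (rule mono_onI)
  fix r s :: real assume r: "r \<in> {0..1}" and s: "s \<in> {0..1}" and rs: "r \<le> s"
  show "(\<Sum>k=0..n. a k * r^k * (1-r)^(n-k)) \<le> (\<Sum>k=0..n. a k * s^k * (1-s)^(n-k))"
  proof (rule DERIV_nonneg_imp_nondecreasing[OF rs])
    fix x assume x: "r \<le> x" "x \<le> s"
    have "((\<lambda>x. \<Sum>k=0..n. a k * x^k * (1-x)^(n-k)) has_real_derivative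
      (\<Sum>k<n. (real (k+1) * a (k+1) - real (n-k) * a k) * x^k * (1-x)^(n-1-k))) (at x)"
      unfolding deriv_form[symmetric] by (rule DERIV_sum) (rule term_deriv)
    moreover have "(\<Sum>k<n. (real (k+1) * a (k+1) - real (n-k) * a k) * x^k * (1-x)^(n-1-k)) \<ge> 0"
      using x r s assms by (intro sum_nonneg mult_nonneg_nonneg) auto
    ultimately show "\<exists>y. ((\<lambda>x. \<Sum>k=0..n. a k * x^k * (1-x)^(n-k)) has_real_derivative y) (at x) \<and> 0 \<le> y"
      by (auto simp: deriv_form)
  qed
qed

lemma key_ineq:
  fixes f \<phi> :: "real \<Rightarrow> real" and n k :: nat
  assumes "n \<ge> 1" and kn: "k < n"
    and "f 0 \<in> \<int>" and "f 1 \<in> \<int>"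
    and phi: "n \<ge> 3 \<longrightarrow> (\<forall>k\<in>{1..n-2}.
           \<phi> (real (k+1) / real n) - \<phi> (real k / real n) \<ge> 1 / real (n choose (k+1)))"
    and m1: "mono_on {0..1 / real n} f"
    and m2: "mono_on {1 - 1 / real n..1} f"
    and m3: "n \<ge> 3 \<longrightarrow> mono_on {1 / real n..1 - 1 / real n} (\<lambda>x. f x - \<phi> x)"
  defines "c \<equiv> \<lambda>k. real_of_int \<lfloor>f (real k / real n) * real (n choose k)\<rfloor>"
  shows "real (n-k) * c k \<le> real (k+1) * c (k+1)"
proof -
  define C0 where "C0 = real (n choose k)"
  define C1 where "C1 = real (n choose (k+1))"
  have C0: "C0 > 0" "C1 > 0" using kn by (auto simp: C0_def C1_def)
  have M: "real (n-k) * C0 = real (k+1) * C1"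
  proof -
    have "(n-k) * (n choose k) = (k+1) * (n choose (k+1))"
      using binomial_absorb_comp[of n k] binomial_absorption[of k n] by simp
    then show ?thesis unfolding C0_def C1_def by (metis of_nat_mult)
  qed
  have npos: "real n > 0" using assms(1) by simp
  have suff: "c k / C0 \<le> c (k+1) / C1"
  proof (cases "k = 0")
    case True
    obtain z where z: "f 0 = of_int z" using assms(3) Ints_cases by blast
    have ck: "c k = f 0" using True z by (simp add: c_def)
    have "f 0 \<le> f (1 / real n)"
      using m1 npos by (intro mono_onD[OF m1]) auto
    then have "f 0 * real n \<le> f (1/real n) * real n" using npos by simp
    then have "of_int (z * int n) \<le> f (1/real n) * real n" using z by simp
    then have "z * int n \<le> \<lfloor>f (1/real n) * real n\<rfloor>" by (simp add: le_floor_iff)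
    moreover have "c (k+1) = real_of_int \<lfloor>f (1/real n) * real n\<rfloor>" using True by (simp add: c_def)
    ultimately have "real_of_int z * real n \<le> c (k+1)"
      by (metis of_int_le_iff of_int_mult of_int_of_nat_eq)
    then show ?thesis using True ck z npos C0 by (simp add: C0_def C1_def field_simps)
  next
    case k0: False
    have b0: "c k / C0 \<le> f (real k / real n)"
      using C0 by (simp add: c_def C0_def pos_divide_le_eq)
    have b1: "c (k+1) / C1 > f (real (k+1) / real n) - 1 / C1"
    proof -
      have "c (k+1) > f (real (k+1) / real n) * C1 - 1" unfolding c_def C1_def by linarith
      then have "(f (real (k+1) / real n) * C1 - 1) / C1 < c (k+1) / C1"
        using C0 by (simp add: divide_strict_right_mono)
      then show ?thesis using C0 by (simp add: diff_divide_distrib)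
    qed
    show ?thesis
    proof (cases "k + 1 = n")
      case True
      obtain z where z: "f 1 = of_int z" using assms(4) Ints_cases by blast
      have "c (k+1) / C1 = f 1" using True z by (simp add: c_def C1_def)
      moreover have "f (real k / real n) \<le> f 1"
      proof (rule mono_onD[OF m2])
        show "real k / real n \<in> {1 - 1 / real n..1}" using True npos kn
          by (auto simp: field_simps)
      qed (use npos kn in auto)
      ultimately show ?thesis using b0 by linarith
    next
      case False
      have n3: "n \<ge> 3" and k1: "k \<in> {1..n-2}" using k0 False kn by auto
      have "\<phi> (real (k+1) / real n) - \<phi> (real k / real n) \<ge> 1 / C1"
        using phi n3 k1 unfolding C1_def by blast
      moreover have "f (real k / real n) - \<phi> (real k / real n) \<le> f (real (k+1) / real n) - \<phi> (real (k+1) / real n)"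
      proof -
        have kk: "real k + 2 \<le> real n" "1 \<le> real k" using k1 n3 by auto
        have a: "real k / real n \<in> {1 / real n..1 - 1 / real n}"
          using kk npos by (auto simp: field_simps)
        have kn2: "(real k + 2) * real n \<le> real n * real n" using kk npos by (intro mult_right_mono) auto
        have b: "real (k+1) / real n \<in> {1 / real n..1 - 1 / real n}"
          using kk npos kn2 by (auto simp: field_simps distrib_right)
        have "real k / real n \<le> real (k+1) / real n" using npos by (simp add: divide_right_mono)
        then show ?thesis using mono_onD[OF m3[rule_format, OF n3] a b] by simp
      qed
      ultimately show ?thesis using b0 b1 by linarith
    qed
  qed
  have "real (n-k) * c k = (real (n-k) * C0) * (c k / C0)" using C0 by simp
  also have "\<dots> \<le> (real (k+1) * C1) * (c (k+1) / C1)" unfolding M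
    by (rule mult_left_mono[OF suff]) (use C0 in simp)
  also have "\<dots> = real (k+1) * c (k+1)" using C0 by simp
  finally show ?thesis .
qed

theorem proposition2p2:
  fixes f \<phi> :: "real \<Rightarrow> real" and n :: nat
  assumes "n \<ge> 1"
    and "f 0 \<in> \<int>" and "f 1 \<in> \<int>"
    and "n \<ge> 3 \<longrightarrow> (\<forall>k\<in>{1..n-2}.
           \<phi> (real (k+1) / real n) - \<phi> (real k / real n) \<ge> 1 / real (n choose (k+1)))"
    and "mono_on {0..1 / real n} f"
    and "mono_on {1 - 1 / real n..1} f"
    and "n \<ge> 3 \<longrightarrow> mono_on {1 / real n..1 - 1 / real n} (\<lambda>x. f x - \<phi> x)"
  shows "mono_on {0..1} (Btilde n f)"
proof -
  have "Btilde n f = (\<lambda>x. \<Sum>k=0..n. real_of_int \<lfloor>f (real k / real n) * real (n choose k)\<rfloor> * x^k * (1-x)^(n-k))"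
    by (rule ext) (simp add: Btilde_def)
  moreover have "mono_on {0..1} (\<lambda>x. \<Sum>k=0..n. real_of_int \<lfloor>f (real k / real n) * real (n choose k)\<rfloor> * x^k * (1-x)^(n-k))"
    by (rule bern_mono) (rule key_ineq[OF assms(1) _ assms(2-7)], assumption)
  ultimately show ?thesis by simp
qed

end
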